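(* Let $\mathcal H$ be a real Hilbert space and $f\colon\mathcal H\to\left]-\infty,+\infty\right]$ proper, lower semicontinuous, convex, with $\operatorname{int}\operatorname{dom} f\neq\varnothing$, Gâteaux differentiable on $\operatorname{int}\operatorname{dom} f$, and essentially strictly convex. Let $T_1,\dots,T_m\colon\mathcal H\to\mathcal H$ with $\operatorname{int}\operatorname{dom} f\cap\bigcap_{i=1}^m\operatorname{Fix}T_i\neq\varnothing$, and let $\mathcal S(x)=\{x,T_1x,\dots,T_mx\}$. Then $$\operatorname{Fix}\overrightarrow{CC}_{\mathcal S}=\operatorname{int}\operatorname{dom} f\cap\bigcap_{i=1}^m\operatorname{Fix}T_i \quad\text{and}\quad \operatorname{Fix}\overleftarrow{CC}_{\mathcal S}=\operatorname{int}\operatorname{dom} f\cap\bigcap_{i=1}^m\operatorname{Fix}T_i,$$ where for a set-valued map $A$, $\operatorname{Fix}A=\{x: x\in A(x)\}$.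
   Context: Bregman distance: $D_f(x,y)=f(x)-f(y)-\langle\nabla f(y),x-y\rangle$ if $y\in\operatorname{int}\operatorname{dom} f$, $+\infty$ otherwise. Essentially strictly convex: $(\partial f)^{-1}$ is locally bounded on its domain and $f$ is strictly convex on every convex subset of $\operatorname{dom}\partial f$. Forward Bregman circumcenter mapping: for $y\in\mathcal H$ with $\mathcal S(y)\subseteq\operatorname{dom} f$, $\overrightarrow{CC}_{\mathcal S}(y)=\{v\in\operatorname{aff}(\mathcal S(y))\cap\operatorname{int}\operatorname{dom} f: D_f(y,v)=D_f(T_1y,v)=\cdots=D_f(T_my,v)\}$ (empty if $\mathcal S(y)\not\subseteq\operatorname{dom}f$). Backward Bregman circumcenter mapping: for $y\in\mathcal H$ with $\mathcal S(y)\subseteq\operatorname{int}\operatorname{dom} f$, $\overleftarrow{CC}_{\mathcal S}(y)=\{p\in\operatorname{aff}(\mathcal S(y))\cap\operatorname{dom} f: D_f(p,y)=D_f(p,T_1y)=\cdots=D_f(p,T_my)\}$ (empty if $\mathcal S(y)\not\subseteq\operatorname{int}\operatorname{dom} f$). Here $\operatorname{aff}$ denotes affine hull. *)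

theory Defs
  imports "HOL-Analysis.Analysis"
begin

definition edom :: "('a \<Rightarrow> ereal) \<Rightarrow> 'a set" where
  "edom f = {x. f x < \<infinity>}"

definition proper_fun :: "('a \<Rightarrow> ereal) \<Rightarrow> bool" where
  "proper_fun f \<longleftrightarrow> (\<exists>x. f x < \<infinity>) \<and> (\<forall>x. f x \<noteq> -\<infinity>)"

definition lsc_fun :: "('a::topological_space \<Rightarrow> ereal) \<Rightarrow> bool" where
  "lsc_fun f \<longleftrightarrow> (\<forall>c::ereal. closed {x. f x \<le> c})"

definition convex_efun :: "('a::real_vector \<Rightarrow> ereal) \<Rightarrow> bool" where
  "convex_efun f \<longleftrightarrow> (\<forall>x y. \<forall>t::real. 0 < t \<and> t < 1 \<longrightarrow>
      f (t *\<^sub>R x + (1 - t) *\<^sub>R y) \<le> ereal t * f x + ereal (1 - t) * f y)"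

definition strictly_convex_on_efun :: "'a::real_vector set \<Rightarrow> ('a \<Rightarrow> ereal) \<Rightarrow> bool" where
  "strictly_convex_on_efun C f \<longleftrightarrow> (\<forall>x\<in>C. \<forall>y\<in>C. \<forall>t::real. x \<noteq> y \<and> 0 < t \<and> t < 1 \<longrightarrow>
      f (t *\<^sub>R x + (1 - t) *\<^sub>R y) < ereal t * f x + ereal (1 - t) * f y)"

definition has_gateaux_gradient :: "('a::real_inner \<Rightarrow> ereal) \<Rightarrow> 'a \<Rightarrow> 'a \<Rightarrow> bool" where
  "has_gateaux_gradient f v y \<longleftrightarrow> (\<forall>h. ((\<lambda>t::real. (real_of_ereal (f (y + t *\<^sub>R h)) - real_of_ereal (f y)) / t)
      \<longlongrightarrow> inner v h) (at 0))"

definition gateaux_differentiable_at :: "('a::real_inner \<Rightarrow> ereal) \<Rightarrow> 'a \<Rightarrow> bool" where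
  "gateaux_differentiable_at f y \<longleftrightarrow> (\<exists>v. has_gateaux_gradient f v y)"

definition grad :: "('a::real_inner \<Rightarrow> ereal) \<Rightarrow> 'a \<Rightarrow> 'a" where
  "grad f y = (SOME v. has_gateaux_gradient f v y)"

definition subdiff :: "('a::real_inner \<Rightarrow> ereal) \<Rightarrow> 'a \<Rightarrow> 'a set" where
  "subdiff f x = {u. f x < \<infinity> \<and> (\<forall>y. f x + ereal (inner u (y - x)) \<le> f y)}"

definition essentially_strictly_convex :: "('a::real_inner \<Rightarrow> ereal) \<Rightarrow> bool" where
  "essentially_strictly_convex f \<longleftrightarrow>
     (\<comment> \<open>(\<partial>f)^{-1} is locally bounded on its domain\<close>
      (\<forall>u. (\<exists>x. u \<in> subdiff f x) \<longrightarrow>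
          (\<exists>e>0. bounded {x. \<exists>w\<in>ball u e. w \<in> subdiff f x})) \<and>
      (\<forall>C. convex C \<and> C \<subseteq> {x. subdiff f x \<noteq> {}} \<longrightarrow> strictly_convex_on_efun C f))"

definition bregman :: "('a::real_inner \<Rightarrow> ereal) \<Rightarrow> 'a \<Rightarrow> 'a \<Rightarrow> ereal" where
  "bregman f x y = (if y \<in> interior (edom f)
      then f x - f y - ereal (inner (grad f y) (x - y)) else \<infinity>)"

definition Fix :: "('a \<Rightarrow> 'a) \<Rightarrow> 'a set" where
  "Fix T = {x. T x = x}"

definition Fix_set :: "('a \<Rightarrow> 'a set) \<Rightarrow> 'a set" where
  "Fix_set A = {x. x \<in> A x}"

definition Sset :: "(nat \<Rightarrow> 'a \<Rightarrow> 'a) \<Rightarrow> nat \<Rightarrow> 'a \<Rightarrow> 'a set" where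
  "Sset T m y = insert y ((\<lambda>i. T i y) ` {1..m})"

definition fwd_CC :: "('a::real_inner \<Rightarrow> ereal) \<Rightarrow> (nat \<Rightarrow> 'a \<Rightarrow> 'a) \<Rightarrow> nat \<Rightarrow> 'a \<Rightarrow> 'a set" where
  "fwd_CC f T m y = (if Sset T m y \<subseteq> edom f then
      {v \<in> affine hull (Sset T m y) \<inter> interior (edom f).
         \<forall>i\<in>{1..m}. bregman f y v = bregman f (T i y) v}
     else {})"

definition bwd_CC :: "('a::real_inner \<Rightarrow> ereal) \<Rightarrow> (nat \<Rightarrow> 'a \<Rightarrow> 'a) \<Rightarrow> nat \<Rightarrow> 'a \<Rightarrow> 'a set" where
  "bwd_CC f T m y = (if Sset T m y \<subseteq> interior (edom f) then
      {p \<in> affine hull (Sset T m y) \<inter> edom f.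
         \<forall>i\<in>{1..m}. bregman f p y = bregman f p (T i y)}
     else {})"

end

theory Submission
  imports Defs
begin

lemma subgrad_lemma:
  fixes f :: "'a::real_inner \<Rightarrow> ereal"
  assumes cf: "convex_efun f" and pf: "proper_fun f" and fy: "f y = ereal a"
    and gg: "has_gateaux_gradient f g y"
  shows "ereal (a + inner g (z - y)) \<le> f z"
proof (cases "f z = \<infinity>")
  case True then show ?thesis by simp
next
  case False
  have "f z \<noteq> -\<infinity>" using pf unfolding proper_fun_def by auto
  with False obtain b where fz: "f z = ereal b" by (cases "f z") auto
  define h where "h = z - y"
  define Q where "Q = (\<lambda>t::real. (real_of_ereal (f (y + t *\<^sub>R h)) - real_of_ereal (f y)) / t)"
  have lim: "(Q \<longlongrightarrow> inner g h) (at 0)" using gg unfolding has_gateaux_gradient_def Q_def by blast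
  hence limr: "(Q \<longlongrightarrow> inner g h) (at_right 0)"
    by (rule filterlim_mono) (auto simp: at_le)
  have ev: "eventually (\<lambda>t. Q t \<le> b - a) (at_right (0::real))"
    unfolding eventually_at_right_field
  proof (intro exI[of _ 1] conjI allI impI)
    fix t :: real assume t: "0 < t" "t < 1"
    have eq: "y + t *\<^sub>R h = t *\<^sub>R z + (1 - t) *\<^sub>R y" by (simp add: h_def algebra_simps)
    have "f (y + t *\<^sub>R h) \<le> ereal t * f z + ereal (1 - t) * f y"
      using cf t unfolding convex_efun_def eq by blast
    also have "\<dots> = ereal (t * b + (1 - t) * a)" by (simp add: fz fy)
    finally have le: "f (y + t *\<^sub>R h) \<le> ereal (t * b + (1 - t) * a)" .
    have "f (y + t *\<^sub>R h) \<noteq> -\<infinity>" using pf unfolding proper_fun_def by auto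
    with le obtain r where r: "f (y + t *\<^sub>R h) = ereal r" "r \<le> t * b + (1 - t) * a"
      by (cases "f (y + t *\<^sub>R h)") auto
    have "Q t = (r - a) / t" by (simp add: Q_def r fy)
    also have "\<dots> \<le> b - a"
    proof -
      have "r - a \<le> (b - a) * t" using r by (simp add: algebra_simps)
      thus ?thesis using t by (simp add: divide_le_eq)
    qed
    finally show "Q t \<le> b - a" .
  qed simp
  have "inner g h \<le> b - a"
    using tendsto_le[OF trivial_limit_at_right_real tendsto_const limr ev] .
  thus ?thesis by (simp add: fz h_def)
qed

lemma bregman_zero:
  fixes f :: "'a::real_inner \<Rightarrow> ereal"
  assumes cf: "convex_efun f" and pf: "proper_fun f"
    and es: "essentially_strictly_convex f"
    and yi: "y \<in> interior (edom f)" and gd: "gateaux_differentiable_at f y"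
    and b0: "bregman f x y = 0"
  shows "x = y"
proof (rule ccontr)
  assume ne: "x \<noteq> y"
  have "y \<in> edom f" using yi interior_subset by blast
  hence "f y < \<infinity>" by (simp add: edom_def)
  moreover have "f y \<noteq> -\<infinity>" using pf unfolding proper_fun_def by auto
  ultimately obtain a where fy: "f y = ereal a" by (cases "f y") auto
  define g where "g = grad f y"
  have gg: "has_gateaux_gradient f g y"
    using gd unfolding gateaux_differentiable_at_def g_def grad_def by (rule someI_ex)
  define c where "c = inner g (x - y)"
  have b0': "f x - f y - ereal c = 0" using b0 yi by (simp add: bregman_def g_def c_def)
  have "f x \<noteq> -\<infinity>" using pf unfolding proper_fun_def by auto
  moreover have "f x \<noteq> \<infinity>" using b0' fy by auto
  ultimately obtain bx where fxb: "f x = ereal bx" by (cases "f x") auto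
  with b0' fy have fx: "f x = ereal (a + c)" by simp
  have sub: "\<And>z. ereal (a + inner g (z - y)) \<le> f z"
    by (rule subgrad_lemma[OF cf pf fy gg])
  have onseg: "f z = ereal (a + inner g (z - y))" if "z \<in> closed_segment y x" for z
  proof -
    have "\<exists>u. 0 \<le> u \<and> u \<le> 1 \<and> z = (1 - u) *\<^sub>R y + u *\<^sub>R x"
      using that by (simp add: in_segment)
    then obtain u where u: "0 \<le> u" "u \<le> 1" "z = (1 - u) *\<^sub>R y + u *\<^sub>R x" by blast
    have zy0: "z - y = u *\<^sub>R (x - y)" by (simp add: u(3) algebra_simps)
    have zy: "inner g (z - y) = u * c" unfolding zy0 c_def by (rule inner_scaleR_right)
    show ?thesis
    proof (cases "u = 0")
      case True
      then have "z = y" using u(3) by simp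
      then show ?thesis using fy by simp
    next
      case u0: False
      show ?thesis
      proof (cases "u = 1")
        case True
        then have "z = x" using u(3) by simp
        then show ?thesis using fx by (simp add: c_def)
      next
        case False
        with u u0 have u': "0 < u" "u < 1" by auto
        have eq: "z = u *\<^sub>R x + (1 - u) *\<^sub>R y" using u(3) by (simp add: add.commute)
        have "f z \<le> ereal u * f x + ereal (1 - u) * f y"
          using cf u' unfolding convex_efun_def eq by blast
        also have "\<dots> = ereal (u * (a + c) + (1 - u) * a)" by (simp add: fx fy)
        also have "\<dots> = ereal (a + inner g (z - y))"
        proof -
          have "u * (a + c) + (1 - u) * a = a + inner g (z - y)" unfolding zy by (simp add: algebra_simps)
          thus ?thesis by simp
        qed
        finally have "f z \<le> ereal (a + inner g (z - y))" .
        with sub[of z] show ?thesis by (auto intro: antisym)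
      qed
    qed
  qed
  have insub: "subdiff f z \<noteq> {}" if "z \<in> closed_segment y x" for z
  proof -
    have "g \<in> subdiff f z"
      unfolding subdiff_def
    proof (safe)
      show "f z < \<infinity>" using onseg[OF that] by simp
    next
      fix w
      have "f z + ereal (inner g (w - z)) = ereal (a + inner g (w - y))"
        using onseg[OF that] by (simp add: inner_diff_right)
      also have "\<dots> \<le> f w" by (rule sub)
      finally show "f z + ereal (inner g (w - z)) \<le> f w" .
    qed
    thus ?thesis by blast
  qed
  have sc: "strictly_convex_on_efun (closed_segment y x) f"
  proof -
    have "closed_segment y x \<subseteq> {x. subdiff f x \<noteq> {}}" using insub by blast
    thus ?thesis using es convex_closed_segment unfolding essentially_strictly_convex_def by blast
  qed
  have xs: "x \<in> closed_segment y x" and ys: "y \<in> closed_segment y x" by auto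
  have "f ((1/2) *\<^sub>R x + (1 - 1/2) *\<^sub>R y) < ereal (1/2) * f x + ereal (1 - 1/2) * f y"
  proof -
    have H: "\<And>p q t. p \<in> closed_segment y x \<Longrightarrow> q \<in> closed_segment y x \<Longrightarrow> p \<noteq> q \<Longrightarrow> 0 < t \<Longrightarrow> t < 1 \<Longrightarrow>
      f (t *\<^sub>R p + (1 - t) *\<^sub>R q) < ereal t * f p + ereal (1 - t) * f q"
      using sc unfolding strictly_convex_on_efun_def by blast
    show ?thesis by (rule H[OF xs ys ne]) simp_all
  qed
  moreover have ms: "(1/2) *\<^sub>R x + (1 - 1/2) *\<^sub>R y \<in> closed_segment y x"
    unfolding in_segment by (intro exI[of _ "1/2"]) (simp add: add.commute)
  moreover have dm: "(1/2) *\<^sub>R x + (1 - 1/2) *\<^sub>R y - y = (1/2) *\<^sub>R (x - y)"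
  proof -
    have hh: "(1/2::real) *\<^sub>R y + (1/2) *\<^sub>R y = y"
      by (metis scaleR_add_left field_sum_of_halves scaleR_one)
    show ?thesis using hh by (simp add: algebra_simps)
  qed
  have rhs: "ereal (1/2) * f x + ereal (1 - 1/2) * f y = ereal (a + c/2)"
    by (simp add: fx fy field_simps)
  have lhs: "f ((1/2) *\<^sub>R x + (1 - 1/2) *\<^sub>R y) = ereal (a + c/2)"
    using onseg[OF ms] unfolding dm inner_scaleR_right c_def by simp
  ultimately show False using rhs lhs by simp
qed

lemma bregman_self:
  assumes "proper_fun f" and "y \<in> interior (edom f)"
  shows "bregman f y y = 0"
proof -
  have "y \<in> edom f" using assms(2) interior_subset by blast
  hence "f y < \<infinity>" by (simp add: edom_def)
  moreover have "f y \<noteq> -\<infinity>" using assms(1) unfolding proper_fun_def by auto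
  ultimately obtain a where fy: "f y = ereal a" by (cases "f y") auto
  thus ?thesis using assms(2) by (simp add: bregman_def)
qed

theorem lemma4p6:
  fixes f :: "'a::{real_inner, complete_space} \<Rightarrow> ereal"
    and T :: "nat \<Rightarrow> 'a \<Rightarrow> 'a"
    and m :: nat
  assumes "1 \<le> m"
    and "proper_fun f" and "lsc_fun f" and "convex_efun f"
    and "interior (edom f) \<noteq> {}"
    and "\<forall>y\<in>interior (edom f). gateaux_differentiable_at f y"
    and "essentially_strictly_convex f"
    and "interior (edom f) \<inter> (\<Inter>i\<in>{1..m}. Fix (T i)) \<noteq> {}"
  shows "Fix_set (fwd_CC f T m) = interior (edom f) \<inter> (\<Inter>i\<in>{1..m}. Fix (T i)) \<and>
         Fix_set (bwd_CC f T m) = interior (edom f) \<inter> (\<Inter>i\<in>{1..m}. Fix (T i))"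
proof -
  note pf = assms(2) and cf = assms(4) and gd = assms(6) and es = assms(7)
  have S1: "Sset T m x = {x}" if "x \<in> (\<Inter>i\<in>{1..m}. Fix (T i))" for x
    using that by (auto simp: Sset_def Fix_def)
  have A: "Fix_set (fwd_CC f T m) = interior (edom f) \<inter> (\<Inter>i\<in>{1..m}. Fix (T i))"
  proof (intro equalityI subsetI)
    fix x assume "x \<in> Fix_set (fwd_CC f T m)"
    hence x: "x \<in> fwd_CC f T m x" by (simp add: Fix_set_def)
    then have xi: "x \<in> interior (edom f)" and
      eqs: "\<forall>i\<in>{1..m}. bregman f x x = bregman f (T i x) x"
      unfolding fwd_CC_def by (auto split: if_splits)
    have "T i x = x" if "i \<in> {1..m}" for i
      using bregman_zero[OF cf pf es xi] gd xi eqs that bregman_self[OF pf xi] by metis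
    thus "x \<in> interior (edom f) \<inter> (\<Inter>i\<in>{1..m}. Fix (T i))" using xi by (auto simp: Fix_def)
  next
    fix x assume x: "x \<in> interior (edom f) \<inter> (\<Inter>i\<in>{1..m}. Fix (T i))"
    hence "x \<in> edom f" using interior_subset by blast
    with x S1[of x] show "x \<in> Fix_set (fwd_CC f T m)"
      by (auto simp: Fix_set_def fwd_CC_def Fix_def hull_inc)
  qed
  have B: "Fix_set (bwd_CC f T m) = interior (edom f) \<inter> (\<Inter>i\<in>{1..m}. Fix (T i))"
  proof (intro equalityI subsetI)
    fix x assume "x \<in> Fix_set (bwd_CC f T m)"
    hence x: "x \<in> bwd_CC f T m x" by (simp add: Fix_set_def)
    then have ss: "Sset T m x \<subseteq> interior (edom f)" and
      eqs: "\<forall>i\<in>{1..m}. bregman f x x = bregman f x (T i x)"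
      unfolding bwd_CC_def by (auto split: if_splits)
    have xi: "x \<in> interior (edom f)" using ss by (auto simp: Sset_def)
    have "T i x = x" if i: "i \<in> {1..m}" for i
    proof -
      have ti: "T i x \<in> interior (edom f)" using ss i by (auto simp: Sset_def)
      show ?thesis
        using bregman_zero[OF cf pf es ti] gd ti eqs i bregman_self[OF pf xi] by metis
    qed
    thus "x \<in> interior (edom f) \<inter> (\<Inter>i\<in>{1..m}. Fix (T i))" using xi by (auto simp: Fix_def)
  next
    fix x assume x: "x \<in> interior (edom f) \<inter> (\<Inter>i\<in>{1..m}. Fix (T i))"
    hence "x \<in> edom f" using interior_subset by blast
    with x S1[of x] show "x \<in> Fix_set (bwd_CC f T m)"
      by (auto simp: Fix_set_def bwd_CC_def Fix_def hull_inc)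
  qed
  from A B show ?thesis ..
qed

end
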